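(* Let $r,s$ be integers with $r\ge s\ge 1$, and define $$\textsc{MaxH}(r,s)=\begin{cases}0 & r\le 2s-1,\\ \dfrac{1}{2^r}\sum_{i=s}^{r}\binom{r}{i} & r\ge 2s.\end{cases}$$ For every $h>\textsc{MaxH}(r,s)$ there exists an instance with two groups of binary agents in which every agent desires exactly $r$ goods, and in which there is no allocation such that, in each group $A_i$, at least $h\cdot n_i$ agents receive (via their group's bundle) at least $s$ of their desired goods.
   Context: There is a finite set $G$ of goods and two groups $A_1,A_2$ of agents, with $n_i\ge 1$ agents in $A_i$. A binary agent has an additive utility with $u_a(\{g\})\in\{0,1\}$ for each good $g$; she desires $g$ iff $u_a(\{g\})=1$. An allocation is a partition $(G_1,G_2)$ of $G$; agents of $A_i$ receive the bundle $G_i$. *)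

theory Defs
  imports Complex_Main
begin

text \<open>Goods are natural numbers; an agent is given by her utility on single goods,
  u :: nat \<Rightarrow> nat, with u g = u_a({g}). Utilities are additive.\<close>

definition binary_agent :: "nat set \<Rightarrow> (nat \<Rightarrow> nat) \<Rightarrow> bool" where
  "binary_agent G u \<longleftrightarrow> (\<forall>g\<in>G. u g \<in> {0, 1})"

definition desired :: "nat set \<Rightarrow> (nat \<Rightarrow> nat) \<Rightarrow> nat set" where
  "desired G u = {g \<in> G. u g = 1}"

definition bundle_util :: "(nat \<Rightarrow> nat) \<Rightarrow> nat set \<Rightarrow> nat" where
  "bundle_util u B = (\<Sum>g\<in>B. u g)"

definition is_allocation :: "nat set \<Rightarrow> nat set \<Rightarrow> nat set \<Rightarrow> bool" where
  "is_allocation G G1 G2 \<longleftrightarrow> G1 \<union> G2 = G \<and> G1 \<inter> G2 = {}"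

text \<open>Number of agents of a group (a list, so agents may coincide in preferences)
  receiving at least s of their desired goods from bundle B.\<close>
definition num_sat :: "nat \<Rightarrow> (nat \<Rightarrow> nat) list \<Rightarrow> nat set \<Rightarrow> nat" where
  "num_sat s A B = length (filter (\<lambda>u. bundle_util u B \<ge> s) A)"

definition MaxH :: "nat \<Rightarrow> nat \<Rightarrow> real" where
  "MaxH r s = (if r \<le> 2 * s - 1 then 0
               else (\<Sum>i = s..r. real (r choose i)) / 2 ^ r)"

end

theory Submission imports Defs begin

definition ind :: "nat set \<Rightarrow> nat \<Rightarrow> nat" where "ind S g = (if g \<in> S then 1 else 0)"

lemma bu_ind: "finite B \<Longrightarrow> bundle_util (ind S) B = card (S \<inter> B)"
  unfolding bundle_util_def ind_def by (simp add: sum.If_cases Int_commute Int_def)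

lemma count_layer:
  assumes fin: "finite G" and HG: "H \<subseteq> G" and i: "i \<le> r"
  shows "card {S. S \<subseteq> G \<and> card S = r \<and> card (S \<inter> H) = i}
       = (card H choose i) * (card (G - H) choose (r - i))"
proof -
  let ?X = "{A. A \<subseteq> H \<and> card A = i}" and ?Y = "{B. B \<subseteq> G - H \<and> card B = r - i}"
  have finH: "finite H" using fin HG finite_subset by blast
  have inj: "inj_on (\<lambda>(A,B). A \<union> B) (?X \<times> ?Y)"
  proof (rule inj_onI, clarsimp)
    fix A B A' B' assume "A \<subseteq> H" "B \<subseteq> G - H" "A' \<subseteq> H" "B' \<subseteq> G - H" "A \<union> B = A' \<union> B'"
    then show "A = A' \<and> B = B'" by blast
  qed
  have img: "{S. S \<subseteq> G \<and> card S = r \<and> card (S \<inter> H) = i} = (\<lambda>(A,B). A \<union> B) ` (?X \<times> ?Y)"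
  proof (rule set_eqI, rule iffI)
    fix S assume S: "S \<in> {S. S \<subseteq> G \<and> card S = r \<and> card (S \<inter> H) = i}"
    then have fS: "finite S" using fin finite_subset by blast
    have "card S = card (S \<inter> H) + card (S - H)"
      using fS by (rule card_Int_Diff)
    then have "card (S - H) = r - i" using S by auto
    moreover have "S = (S \<inter> H) \<union> (S - H)" by blast
    ultimately show "S \<in> (\<lambda>(A,B). A \<union> B) ` (?X \<times> ?Y)" using S
      by (intro image_eqI[of _ _ "(S \<inter> H, S - H)"]) auto
  next
    fix S assume "S \<in> (\<lambda>(A,B). A \<union> B) ` (?X \<times> ?Y)"
    then obtain A B where AB: "A \<subseteq> H" "card A = i" "B \<subseteq> G - H" "card B = r - i" "S = A \<union> B" by auto
    have fA: "finite A" using AB finH finite_subset by blast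
    have fB: "finite B" using AB fin finite_subset by blast
    have dj: "A \<inter> B = {}" using AB by blast
    have "card S = r" using AB card_Un_disjoint[OF fA fB dj] i by simp
    moreover have "S \<inter> H = A" using AB by blast
    ultimately show "S \<in> {S. S \<subseteq> G \<and> card S = r \<and> card (S \<inter> H) = i}" using AB HG by auto
  qed
  have "card {S. S \<subseteq> G \<and> card S = r \<and> card (S \<inter> H) = i} = card (?X \<times> ?Y)"
    unfolding img by (rule card_image[OF inj])
  also have "\<dots> = card ?X * card ?Y" by (rule card_cartesian_product)
  also have "\<dots> = (card H choose i) * (card (G - H) choose (r - i))"
    using n_subsets[OF finH, of i] n_subsets[of "G - H" "r - i"] fin by simp
  finally show ?thesis .
qed

lemma count_all:
  assumes fin: "finite G" and HG: "H \<subseteq> G" and sr: "s \<le> r"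
  shows "card {S. S \<subseteq> G \<and> card S = r \<and> s \<le> card (S \<inter> H)}
       = (\<Sum>i=s..r. (card H choose i) * (card (G - H) choose (r - i)))"
proof -
  have eq: "{S. S \<subseteq> G \<and> card S = r \<and> s \<le> card (S \<inter> H)}
      = (\<Union>i\<in>{s..r}. {S. S \<subseteq> G \<and> card S = r \<and> card (S \<inter> H) = i})"
  proof (rule set_eqI, rule iffI)
    fix S assume S: "S \<in> {S. S \<subseteq> G \<and> card S = r \<and> s \<le> card (S \<inter> H)}"
    then have "finite S" using fin finite_subset by blast
    then have "card (S \<inter> H) \<le> r" using S card_mono[of S "S \<inter> H"] by auto
    then show "S \<in> (\<Union>i\<in>{s..r}. {S. S \<subseteq> G \<and> card S = r \<and> card (S \<inter> H) = i})" using S by auto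
  qed auto
  have "card {S. S \<subseteq> G \<and> card S = r \<and> s \<le> card (S \<inter> H)}
     = (\<Sum>i=s..r. card {S. S \<subseteq> G \<and> card S = r \<and> card (S \<inter> H) = i})"
    unfolding eq
  proof (rule card_UN_disjoint)
    show "\<forall>i\<in>{s..r}. finite {S. S \<subseteq> G \<and> card S = r \<and> card (S \<inter> H) = i}"
      using fin by (auto intro: finite_subset[of _ "Pow G"])
  qed auto
  also have "\<dots> = (\<Sum>i=s..r. (card H choose i) * (card (G - H) choose (r - i)))"
    by (rule sum.cong) (auto intro: count_layer[OF fin HG])
  finally show ?thesis .
qed

lemma binom_ratio_lim:
  "(\<lambda>n. real (n choose k) / real n ^ k) \<longlonglongrightarrow> 1 / fact k"
proof -
  have eq: "real (n choose k) / real n ^ k = (\<Prod>j=0..<k. 1 - real j / real n) / fact k"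
    if "n > 0" for n
  proof -
    have "real (n choose k) = (\<Prod>j=0..<k. real n - real j) / fact k"
      by (simp add: binomial_gbinomial gbinomial_prod_rev)
    moreover have "(\<Prod>j=0..<k. real n - real j) / real n ^ k = (\<Prod>j=0..<k. 1 - real j / real n)"
    proof -
      have "(\<Prod>j=0..<k. 1 - real j / real n) = (\<Prod>j=0..<k. (real n - real j) / real n)"
        by (rule prod.cong) (use that in \<open>auto simp: field_simps\<close>)
      then show ?thesis by (simp add: prod_dividef)
    qed
    ultimately show ?thesis by (simp add: field_simps)
  qed
  have "(\<lambda>n. (\<Prod>j=0..<k. 1 - real j / real n) / fact k) \<longlonglongrightarrow> (\<Prod>j=0..<k. 1 - 0) / fact k"
    by (intro tendsto_intros) auto
  then have "(\<lambda>n. (\<Prod>j=0..<k. 1 - real j / real n) / fact k) \<longlonglongrightarrow> 1 / fact k" by simp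
  then show ?thesis
    by (rule Lim_transform_eventually) (auto simp: eq eventually_sequentially intro!: exI[of _ 1])
qed

lemma binom2_ratio_lim:
  "(\<lambda>n. real ((2*n) choose k) / real n ^ k) \<longlonglongrightarrow> 2^k / fact k"
proof -
  have sm: "strict_mono (\<lambda>n::nat. 2*n)" by (auto simp: strict_mono_def)
  have "((\<lambda>n. real (n choose k) / real n ^ k) \<circ> (\<lambda>n. 2*n)) \<longlonglongrightarrow> 1 / fact k"
    by (rule LIMSEQ_subseq_LIMSEQ[OF binom_ratio_lim sm])
  then have "(\<lambda>n. 2^k * (real ((2*n) choose k) / (2 * real n) ^ k)) \<longlonglongrightarrow> 2^k * (1 / fact k)"
    by (intro tendsto_mult_left) (simp add: o_def)
  then show ?thesis by (simp add: power_mult_distrib)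
qed

lemma term_lim:
  assumes "i \<le> r"
  shows "(\<lambda>n. real (n choose i) * real (n choose (r-i)) / real ((2*n) choose r))
     \<longlonglongrightarrow> real (r choose i) / 2^r"
proof -
  have "(\<lambda>n. (real (n choose i) / real n ^ i) * (real (n choose (r-i)) / real n ^ (r-i))
          / (real ((2*n) choose r) / real n ^ r))
     \<longlonglongrightarrow> (1 / fact i) * (1 / fact (r-i)) / (2^r / fact r)"
    by (intro tendsto_intros binom_ratio_lim binom2_ratio_lim) auto
  moreover have "(1 / fact i) * (1 / fact (r-i)) / (2^r / fact r) = real (r choose i) / (2::real)^r"
    using assms by (simp add: binomial_fact field_simps)
  moreover have E: "(real (n choose i) / real n ^ i) * (real (n choose (r-i)) / real n ^ (r-i))
          / (real ((2*n) choose r) / real n ^ r) = real (n choose i) * real (n choose (r-i)) / real ((2*n) choose r)"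
    if "n > 0" for n
  proof -
    have "real n ^ i * real n ^ (r-i) = real n ^ r" using assms by (simp add: power_add[symmetric])
    then show ?thesis using that by (simp add: field_simps)
  qed
  ultimately have L: "(\<lambda>n. (real (n choose i) / real n ^ i) * (real (n choose (r-i)) / real n ^ (r-i))
          / (real ((2*n) choose r) / real n ^ r)) \<longlonglongrightarrow> real (r choose i) / 2^r" by simp
  have ev: "\<forall>\<^sub>F n in sequentially. (real (n choose i) / real n ^ i) * (real (n choose (r-i)) / real n ^ (r-i))
          / (real ((2*n) choose r) / real n ^ r) = real (n choose i) * real (n choose (r-i)) / real ((2*n) choose r)"
    unfolding eventually_sequentially by (intro exI[of _ 1] allI impI E) simp
  show ?thesis by (rule Lim_transform_eventually[OF L ev])
qed

lemma num_sat_ind: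
  assumes "distinct xs" "finite B"
  shows "num_sat s (map ind xs) B = card {S \<in> set xs. s \<le> card (S \<inter> B)}"
proof -
  have "num_sat s (map ind xs) B = length (filter (\<lambda>S. s \<le> card (S \<inter> B)) xs)"
    unfolding num_sat_def by (simp add: filter_map o_def bu_ind[OF assms(2)])
  also have "\<dots> = card {S \<in> set xs. s \<le> card (S \<inter> B)}"
    using assms(1) by (simp add: distinct_length_filter Int_commute Collect_conj_eq)
  finally show ?thesis .
qed

lemma desired_ind: "S \<subseteq> G \<Longrightarrow> desired G (ind S) = S"
  unfolding desired_def ind_def by auto

lemma binary_ind: "binary_agent G (ind S)"
  unfolding binary_agent_def ind_def by auto

lemma bound:
  assumes xs: "distinct xs" "set xs = {S. S \<subseteq> {0..<2*n} \<and> card S = r}"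
    and B: "B \<subseteq> {0..<2*n}" "card B \<le> n" and sr: "s \<le> r"
  shows "num_sat s (map ind xs) B \<le> (\<Sum>i=s..r. (n choose i) * (n choose (r - i)))"
proof -
  let ?G = "{0..<2*n}"
  obtain H where H: "B \<subseteq> H" "H \<subseteq> ?G" "card H = n"
    using exists_subset_between[of B n ?G] B by auto
  have fB: "finite B" using B finite_subset by blast
  have cGH: "card (?G - H) = n" using H by (simp add: card_Diff_subset finite_subset)
  have "num_sat s (map ind xs) B = card {S \<in> set xs. s \<le> card (S \<inter> B)}"
    by (rule num_sat_ind[OF xs(1) fB])
  also have "\<dots> \<le> card {S. S \<subseteq> ?G \<and> card S = r \<and> s \<le> card (S \<inter> H)}"
  proof (rule card_mono)
    show "finite {S. S \<subseteq> ?G \<and> card S = r \<and> s \<le> card (S \<inter> H)}"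
      by (auto intro: finite_subset[of _ "Pow ?G"])
    show "{S \<in> set xs. s \<le> card (S \<inter> B)} \<subseteq> {S. S \<subseteq> ?G \<and> card S = r \<and> s \<le> card (S \<inter> H)}"
    proof clarify
      fix S assume "S \<in> set xs" "s \<le> card (S \<inter> B)"
      moreover have "card (S \<inter> B) \<le> card (S \<inter> H)"
        using H by (intro card_mono) (auto intro: finite_subset)
      ultimately show "S \<subseteq> ?G \<and> card S = r \<and> s \<le> card (S \<inter> H)" using xs by auto
    qed
  qed
  also have "\<dots> = (\<Sum>i=s..r. (n choose i) * (n choose (r - i)))"
    using count_all[OF _ H(2) sr] H cGH by simp
  finally show ?thesis .
qed

theorem mainTheorem4:
  fixes r s :: nat and h :: real
  assumes "1 \<le> s" and "s \<le> r" and "h > MaxH r s"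
  shows "\<exists>(G :: nat set) (A1 :: (nat \<Rightarrow> nat) list) (A2 :: (nat \<Rightarrow> nat) list).
           finite G \<and> length A1 \<ge> 1 \<and> length A2 \<ge> 1 \<and>
           (\<forall>u \<in> set A1 \<union> set A2. binary_agent G u \<and> card (desired G u) = r) \<and>
           \<not> (\<exists>G1 G2. is_allocation G G1 G2 \<and>
                 real (num_sat s A1 G1) \<ge> h * real (length A1) \<and>
                 real (num_sat s A2 G2) \<ge> h * real (length A2))"
proof (cases "r \<le> 2 * s - 1")
  case True
  have "MaxH r s = 0" unfolding MaxH_def by (rule if_P[OF True])
  then have h0: "h > 0" using assms(3) by linarith
  let ?G = "{0..<r}"
  let ?A = "[ind ?G]"
  have ns: "num_sat s ?A B = (if s \<le> card B then 1 else 0)" if "B \<subseteq> ?G" for B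
    using that finite_subset[OF that] bu_ind[of B ?G]
    by (simp add: num_sat_def Int_absorb1)
  show ?thesis
  proof (intro exI conjI)
    show "\<forall>u\<in>set ?A \<union> set ?A. binary_agent ?G u \<and> card (desired ?G u) = r"
      by (simp add: binary_ind desired_ind)
    show "\<not> (\<exists>G1 G2. is_allocation ?G G1 G2 \<and>
                 real (num_sat s ?A G1) \<ge> h * real (length ?A) \<and>
                 real (num_sat s ?A G2) \<ge> h * real (length ?A))"
    proof clarify
      fix G1 G2 assume al: "is_allocation ?G G1 G2"
        and a1: "h * real (length ?A) \<le> real (num_sat s ?A G1)"
        and a2: "h * real (length ?A) \<le> real (num_sat s ?A G2)"
      have un: "G1 \<union> G2 = ?G" and dj: "G1 \<inter> G2 = {}" using al unfolding is_allocation_def by blast+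
      have sub: "G1 \<subseteq> ?G" "G2 \<subseteq> ?G" using un by blast+
      have f1: "finite G1" by (rule finite_subset[OF sub(1)]) simp
      have f2: "finite G2" by (rule finite_subset[OF sub(2)]) simp
      have "card G1 + card G2 = card ?G"
        using card_Un_disjoint[OF f1 f2 dj] un by simp
      then have "card G1 + card G2 = r" by simp
      moreover have "s \<le> card G1" using a1 h0 ns[OF sub(1)] by (auto split: if_splits)
      moreover have "s \<le> card G2" using a2 h0 ns[OF sub(2)] by (auto split: if_splits)
      ultimately show False using True assms(1) by linarith
    qed
  qed auto
next
  case False
  let ?q = "\<lambda>n. (\<Sum>i=s..r. real (n choose i) * real (n choose (r-i)) / real ((2*n) choose r))"
  have "?q \<longlonglongrightarrow> (\<Sum>i=s..r. real (r choose i) / 2^r)"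
    by (intro tendsto_sum term_lim) auto
  moreover have "(\<Sum>i=s..r. real (r choose i) / 2^r) = MaxH r s"
    unfolding MaxH_def if_not_P[OF False] by (simp only: sum_divide_distrib)
  ultimately have "\<forall>\<^sub>F n in sequentially. ?q n < h"
    using assms(3) by (auto intro: order_tendstoD)
  moreover have "\<forall>\<^sub>F n in sequentially. r \<le> 2 * n"
    unfolding eventually_sequentially by (intro exI[of _ r]) auto
  ultimately have "\<forall>\<^sub>F n in sequentially. ?q n < h \<and> r \<le> 2 * n" by (rule eventually_conj)
  then obtain N where N: "\<And>n. n \<ge> N \<Longrightarrow> ?q n < h \<and> r \<le> 2 * n"
    unfolding eventually_sequentially by blast
  obtain n where n: "?q n < h" "r \<le> 2 * n" using N[of N] by blast
  let ?G = "{0..<2*n}"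
  let ?R = "{S. S \<subseteq> ?G \<and> card S = r}"
  have finR: "finite ?R" by (auto intro: finite_subset[of _ "Pow ?G"])
  obtain xs where xs: "set xs = ?R" "distinct xs" using finite_distinct_list[OF finR] by blast
  let ?A = "map ind xs"
  have L: "length ?A = (2*n) choose r"
    using xs distinct_card[OF xs(2)] n_subsets[of ?G r] by simp
  have Lpos: "(2*n) choose r \<ge> 1" using n(2) by (simp add: Suc_leI)
  have qn: "real (\<Sum>i=s..r. (n choose i) * (n choose (r - i))) = ?q n * real ((2*n) choose r)"
    using Lpos n(2) by (simp add: sum_distrib_right)
  have key: "real (num_sat s ?A B) < h * real (length ?A)" if "B \<subseteq> ?G" "card B \<le> n" for B
  proof -
    have "real (num_sat s ?A B) \<le> real (\<Sum>i=s..r. (n choose i) * (n choose (r - i)))"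
      using bound[OF xs(2) xs(1) that assms(2)] by (rule of_nat_mono)
    then have "real (num_sat s ?A B) \<le> ?q n * real ((2*n) choose r)"
      by (simp only: qn)
    also have "\<dots> < h * real ((2*n) choose r)" using n Lpos by (intro mult_strict_right_mono) auto
    finally show ?thesis using L by simp
  qed
  show ?thesis
  proof (intro exI conjI)
    show "\<forall>u\<in>set ?A \<union> set ?A. binary_agent ?G u \<and> card (desired ?G u) = r"
      using xs by (auto simp: binary_ind desired_ind)
    show "\<not> (\<exists>G1 G2. is_allocation ?G G1 G2 \<and>
                 real (num_sat s ?A G1) \<ge> h * real (length ?A) \<and>
                 real (num_sat s ?A G2) \<ge> h * real (length ?A))"
    proof clarify
      fix G1 G2 assume al: "is_allocation ?G G1 G2"
        and a1: "h * real (length ?A) \<le> real (num_sat s ?A G1)"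
        and a2: "h * real (length ?A) \<le> real (num_sat s ?A G2)"
      have un: "G1 \<union> G2 = ?G" and dj: "G1 \<inter> G2 = {}" using al unfolding is_allocation_def by blast+
      have sub: "G1 \<subseteq> ?G" "G2 \<subseteq> ?G" using un by blast+
      have f1: "finite G1" by (rule finite_subset[OF sub(1)]) simp
      have f2: "finite G2" by (rule finite_subset[OF sub(2)]) simp
      have "card G1 + card G2 = card ?G"
        using card_Un_disjoint[OF f1 f2 dj] un by simp
      then have "card G1 + card G2 = 2 * n" by simp
      then have "card G1 \<le> n \<or> card G2 \<le> n" by linarith
      then show False
      proof
        assume "card G1 \<le> n" then show False using key[OF sub(1)] a1 by linarith
      next
        assume "card G2 \<le> n" then show False using key[OF sub(2)] a2 by linarith
      qed
    qed
  qed (use L Lpos in auto)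
qed
end
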